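(* Let $n\ge 2$, $G=Sp(n+1)$, $K=\{\mathrm{diag}(B,q):B\in Sp(n),q\in Sp(1)\}$ and $N=\{\mathrm{diag}(A,q_1,q_2):A\in Sp(n-1),q_1,q_2\in Sp(1)\}$. Let $\Delta G\times K\times N$ act on $G\times G$ by $(g,k,h)\cdot(g_1,g_2)=(gg_1k^{-1},gg_2h^{-1})$. For $g\in G$ let $v(g)\in S^{4n+3}\subseteq\mathbb{H}^{n+1}$ be the last column of $g$, let $v_0(g)\in\mathbb{H}^{n-1}$ be the vector of its first $n-1$ entries, $v_n(g)$ its second-to-last entry and $v_{n+1}(g)$ its last entry. Then $(g_1,g_2)$ and $(h_1,h_2)$ lie in the same orbit if and only if $|v_i(g_2^{-1}g_1)|=|v_i(h_2^{-1}h_1)|$ for each $i\in\{0,n,n+1\}$.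
   Context: $Sp(m)$ denotes the group of $m\times m$ quaternionic unitary matrices; $|\cdot|$ is the standard norm on $\mathbb{H}^k$. *)

theory Defs
  imports "HOL-Analysis.Analysis"
begin

datatype quat = Quat (Re1: real) (Im_i: real) (Im_j: real) (Im_k: real)

instantiation quat :: ring_1
begin
definition "0 = Quat 0 0 0 0"
definition "1 = Quat 1 0 0 0"
definition "x + y = Quat (Re1 x + Re1 y) (Im_i x + Im_i y) (Im_j x + Im_j y) (Im_k x + Im_k y)"
definition "- x = Quat (- Re1 x) (- Im_i x) (- Im_j x) (- Im_k x)"
definition "x - y = Quat (Re1 x - Re1 y) (Im_i x - Im_i y) (Im_j x - Im_j y) (Im_k x - Im_k y)"
definition "x * y = Quat
   (Re1 x * Re1 y - Im_i x * Im_i y - Im_j x * Im_j y - Im_k x * Im_k y)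
   (Re1 x * Im_i y + Im_i x * Re1 y + Im_j x * Im_k y - Im_k x * Im_j y)
   (Re1 x * Im_j y - Im_i x * Im_k y + Im_j x * Re1 y + Im_k x * Im_i y)
   (Re1 x * Im_k y + Im_i x * Im_j y - Im_j x * Im_i y + Im_k x * Re1 y)"
instance
  by standard (simp_all add: zero_quat_def one_quat_def plus_quat_def uminus_quat_def
      minus_quat_def times_quat_def algebra_simps quat.expand)
end

definition qcnj :: "quat \<Rightarrow> quat" where
  "qcnj x = Quat (Re1 x) (- Im_i x) (- Im_j x) (- Im_k x)"

definition qnorm2 :: "quat \<Rightarrow> real" where
  "qnorm2 x = (Re1 x)\<^sup>2 + (Im_i x)\<^sup>2 + (Im_j x)\<^sup>2 + (Im_k x)\<^sup>2"

definition qnorm :: "quat \<Rightarrow> real" where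
  "qnorm x = sqrt (qnorm2 x)"

text \<open>Matrices are functions nat => nat => quat; an m x m matrix has indices 0..m-1
  (0-based) and all entries outside this range are 0.\<close>
type_synonym qmat = "nat \<Rightarrow> nat \<Rightarrow> quat"

definition qmat_mult :: "nat \<Rightarrow> qmat \<Rightarrow> qmat \<Rightarrow> qmat" where
  "qmat_mult m A B = (\<lambda>i j. \<Sum>k<m. A i k * B k j)"

definition qadj :: "qmat \<Rightarrow> qmat" where
  "qadj A = (\<lambda>i j. qcnj (A j i))"

definition qid :: "nat \<Rightarrow> qmat" where
  "qid m = (\<lambda>i j. if i = j \<and> i < m then 1 else 0)"

definition is_qmat :: "nat \<Rightarrow> qmat \<Rightarrow> bool" where
  "is_qmat m A \<longleftrightarrow> (\<forall>i j. (m \<le> i \<or> m \<le> j) \<longrightarrow> A i j = 0)"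

definition Sp :: "nat \<Rightarrow> qmat set" where
  "Sp m = {A. is_qmat m A \<and> qmat_mult m (qadj A) A = qid m \<and> qmat_mult m A (qadj A) = qid m}"

definition K_grp :: "nat \<Rightarrow> qmat set" where
  "K_grp n = {k. \<exists>B q. B \<in> Sp n \<and> qnorm q = 1 \<and>
      k = (\<lambda>i j. if i < n \<and> j < n then B i j else if i = n \<and> j = n then q else 0)}"

definition N_grp :: "nat \<Rightarrow> qmat set" where
  "N_grp n = {h. \<exists>A q1 q2. A \<in> Sp (n - 1) \<and> qnorm q1 = 1 \<and> qnorm q2 = 1 \<and>
      h = (\<lambda>i j. if i < n - 1 \<and> j < n - 1 then A i j
                 else if i = n - 1 \<and> j = n - 1 then q1
                 else if i = n \<and> j = n then q2 else 0)}"

definition same_orbit :: "nat \<Rightarrow> qmat \<times> qmat \<Rightarrow> qmat \<times> qmat \<Rightarrow> bool" where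
  "same_orbit n p p' \<longleftrightarrow> (\<exists>g\<in>Sp (n+1). \<exists>k\<in>K_grp n. \<exists>h\<in>N_grp n.
      fst p' = qmat_mult (n+1) (qmat_mult (n+1) g (fst p)) (qadj k) \<and>
      snd p' = qmat_mult (n+1) (qmat_mult (n+1) g (snd p)) (qadj h))"

text \<open>Norms of the pieces of the last column v(g) (index n) of g in Sp(n+1):
  v_0(g) = first n-1 entries, v_n(g) = second-to-last entry, v_{n+1}(g) = last entry.\<close>
definition v0_norm :: "nat \<Rightarrow> qmat \<Rightarrow> real" where
  "v0_norm n g = sqrt (\<Sum>i<n - 1. qnorm2 (g i n))"

definition vn_norm :: "nat \<Rightarrow> qmat \<Rightarrow> real" where
  "vn_norm n g = qnorm (g (n - 1) n)"

definition vlast_norm :: "nat \<Rightarrow> qmat \<Rightarrow> real" where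
  "vlast_norm n g = qnorm (g n n)"

end

theory Submission
  imports Defs
begin


definition qr :: "real \<Rightarrow> quat" where "qr r = Quat r 0 0 0"

lemmas qdefs = zero_quat_def one_quat_def plus_quat_def uminus_quat_def
      minus_quat_def times_quat_def qcnj_def qr_def qnorm2_def

lemma qcnj_mult: "qcnj (a*b) = qcnj b * qcnj a"
  by (cases a; cases b; simp add: qdefs algebra_simps)
lemma qcnj_add: "qcnj (a+b) = qcnj a + qcnj b"
  by (cases a; cases b; simp add: qdefs algebra_simps)
lemma qcnj_diff: "qcnj (a-b) = qcnj a - qcnj b"
  by (cases a; cases b; simp add: qdefs algebra_simps)
lemma qcnj_0[simp]: "qcnj 0 = 0" by (simp add: qdefs)
lemma qcnj_1[simp]: "qcnj 1 = 1" by (simp add: qdefs)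
lemma qcnj_qcnj[simp]: "qcnj (qcnj a) = a" by (cases a; simp add: qdefs)
lemma qcnj_qr[simp]: "qcnj (qr r) = qr r" by (simp add: qdefs)
lemma qcnj_sum: "qcnj (\<Sum>i\<in>S. f i) = (\<Sum>i\<in>S. qcnj (f i))"
  by (induction S rule: infinite_finite_induct) (auto simp: qcnj_add)
lemma qr_comm: "qr r * a = a * qr r" by (cases a; simp add: qdefs)
lemma qr_right: "NO_MATCH (qr x) a \<Longrightarrow> a * qr r = qr r * a" by (simp add: qr_comm)
lemma qr_left: "NO_MATCH (qr x) a \<Longrightarrow> a * (qr r * b) = qr r * (a * b)"
  by (metis mult.assoc qr_comm)
lemma qr_qr: "qr r * qr s = qr (r * s)" by (simp add: qdefs)
lemma qr_qr2: "qr r * (qr s * b) = qr (r * s) * b" by (simp add: qdefs mult.assoc[symmetric])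
lemmas qr_norm = mult.assoc qr_right qr_left qr_qr qr_qr2
lemma qr_add: "qr (a+b) = qr a + qr b" by (simp add: qdefs)
lemma qr_diff: "qr (a-b) = qr a - qr b" by (simp add: qdefs)
lemma qr_mult: "qr (a*b) = qr a * qr b" by (simp add: qdefs)
lemma qr_0[simp]: "qr 0 = 0" by (simp add: qdefs)
lemma qr_1[simp]: "qr 1 = 1" by (simp add: qdefs)
lemma qr_sum: "qr (\<Sum>i\<in>S. f i) = (\<Sum>i\<in>S. qr (f i))"
  by (induction S rule: infinite_finite_induct) (auto simp: qr_add)
lemma qr_inj: "qr a = qr b \<longleftrightarrow> a = b" by (simp add: qdefs)
lemma qcnj_mult_self: "qcnj a * a = qr (qnorm2 a)"
  by (cases a; simp add: qdefs algebra_simps power2_eq_square)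
lemma mult_qcnj_self: "a * qcnj a = qr (qnorm2 a)"
  by (cases a; simp add: qdefs algebra_simps power2_eq_square)
lemma qnorm2_mult: "qnorm2 (a*b) = qnorm2 a * qnorm2 b"
  by (cases a; cases b; simp add: qdefs algebra_simps power2_eq_square)
lemma qnorm2_nonneg: "qnorm2 a \<ge> 0" by (simp add: qnorm2_def)
lemma qnorm2_eq0: "qnorm2 a = 0 \<longleftrightarrow> a = 0"
  by (cases a; simp add: qdefs add_nonneg_eq_0_iff)
lemma qnorm2_qcnj[simp]: "qnorm2 (qcnj a) = qnorm2 a" by (simp add: qdefs)
lemma qnorm2_qr: "qnorm2 (qr r) = r^2" by (simp add: qdefs)
lemma qnorm2_1[simp]: "qnorm2 1 = 1" by (simp add: qdefs)
lemma qnorm_1_iff: "qnorm q = 1 \<longleftrightarrow> qnorm2 q = 1" by (simp add: qnorm_def)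
lemma unit_left: "qnorm a = qnorm b \<Longrightarrow> \<exists>q. qnorm q = 1 \<and> q * a = b"
proof (cases "a = 0")
  case True
  assume "qnorm a = qnorm b"
  then have "qnorm2 b = 0" using True by (simp add: qnorm_def qdefs)
  then show ?thesis using True by (intro exI[of _ 1]) (simp add: qnorm_def qnorm2_eq0)
next
  case False
  assume e: "qnorm a = qnorm b"
  then have e2: "qnorm2 a = qnorm2 b" by (simp add: qnorm_def qnorm2_nonneg)
  have p: "qnorm2 a > 0" using False qnorm2_eq0 qnorm2_nonneg by (metis less_eq_real_def)
  define q where "q = b * qcnj a * qr (1 / qnorm2 a)"
  have "q * a = b * (qcnj a * a) * qr (1/qnorm2 a)"
    by (simp add: q_def mult.assoc qr_comm)
  also have "\<dots> = b" using p by (simp add: qcnj_mult_self mult.assoc qr_mult[symmetric])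
  finally have 1: "q * a = b" .
  have "qnorm2 q = 1" using p e2 by (simp add: q_def qnorm2_mult qnorm2_qr power2_eq_square)
  then show ?thesis using 1 by (auto simp: qnorm_1_iff)
qed


abbreviation mm where "mm \<equiv> qmat_mult"

lemma mm_assoc: "mm m (mm m A B) C = mm m A (mm m B C)"
  unfolding qmat_mult_def
  by (rule ext)+ (simp add: sum_distrib_left sum_distrib_right mult.assoc, subst sum.swap, rule refl)

lemma qadj_mm: "qadj (mm m A B) = mm m (qadj B) (qadj A)"
  unfolding qmat_mult_def qadj_def by (rule ext)+ (simp add: qcnj_sum qcnj_mult)

lemma qadj_qadj[simp]: "qadj (qadj A) = A" by (simp add: qadj_def)

lemma if01_mult[simp]: "(if P then 1 else 0) * x = (if P then x else (0::quat))" by simp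
lemma mult_if01[simp]: "x * (if P then 1 else 0) = (if P then x else (0::quat))" by simp

lemma qid_sum_left: "(\<Sum>k<m. qid m i k * f k) = (if i < m then f i else 0)"
  unfolding qid_def by (simp add: if_distrib[where f="\<lambda>x. x * _"] sum.delta conj_commute cong: if_cong)

lemma qid_sum_right: "(\<Sum>k<m. f k * qid m k j) = (if j < m then f j else 0)"
proof -
  have "(\<Sum>k<m. f k * qid m k j) = (\<Sum>k<m. if k = j then (if j < m then f j else 0) else 0)"
    by (rule sum.cong) (auto simp: qid_def)
  then show ?thesis by (simp add: sum.delta')
qed

lemma mm_qid_inner: "mm m A (mm m (qid m) B) = mm m A B"
  unfolding qmat_mult_def by (rule ext)+ (rule sum.cong, simp_all add: qid_sum_left)

lemma mm_qid_left: "is_qmat m B \<Longrightarrow> mm m (qid m) B = B"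
  unfolding qmat_mult_def by (rule ext)+ (auto simp: qid_sum_left is_qmat_def)

lemma mm_qid_right: "is_qmat m B \<Longrightarrow> mm m B (qid m) = B"
  unfolding qmat_mult_def by (rule ext)+ (auto simp: qid_sum_right is_qmat_def)

lemma is_qmat_mm: "is_qmat m A \<Longrightarrow> is_qmat m B \<Longrightarrow> is_qmat m (mm m A B)"
  unfolding qmat_mult_def is_qmat_def by auto

lemma is_qmat_qadj: "is_qmat m A \<Longrightarrow> is_qmat m (qadj A)"
  unfolding qadj_def is_qmat_def by auto

lemma Sp_is_qmat: "A \<in> Sp m \<Longrightarrow> is_qmat m A" by (simp add: Sp_def)

lemma Sp_cancel1: "A \<in> Sp m \<Longrightarrow> is_qmat m B \<Longrightarrow> mm m (qadj A) (mm m A B) = B"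
  by (simp add: Sp_def mm_assoc[symmetric] mm_qid_left)
lemma Sp_cancel2: "A \<in> Sp m \<Longrightarrow> is_qmat m B \<Longrightarrow> mm m A (mm m (qadj A) B) = B"
  by (simp add: Sp_def mm_assoc[symmetric] mm_qid_left)

lemma Sp_qadj: "A \<in> Sp m \<Longrightarrow> qadj A \<in> Sp m"
  by (simp add: Sp_def is_qmat_qadj)

lemma Sp_mm: "A \<in> Sp m \<Longrightarrow> B \<in> Sp m \<Longrightarrow> mm m A B \<in> Sp m"
  unfolding Sp_def
  apply (simp add: is_qmat_mm qadj_mm mm_assoc)
  apply (simp add: mm_assoc[symmetric] mm_qid_inner)
  apply (simp add: mm_assoc  mm_qid_inner)
  done



definition mv :: "nat \<Rightarrow> qmat \<Rightarrow> (nat \<Rightarrow> quat) \<Rightarrow> nat \<Rightarrow> quat" where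
  "mv m A u = (\<lambda>i. \<Sum>l<m. A i l * u l)"
definition ip :: "nat \<Rightarrow> (nat \<Rightarrow> quat) \<Rightarrow> (nat \<Rightarrow> quat) \<Rightarrow> quat" where
  "ip m u w = (\<Sum>l<m. qcnj (u l) * w l)"
definition vn2 :: "nat \<Rightarrow> (nat \<Rightarrow> quat) \<Rightarrow> real" where
  "vn2 m u = (\<Sum>l<m. qnorm2 (u l))"

lemma mv_mm: "mv m (mm m A B) u = mv m A (mv m B u)"
  unfolding qmat_mult_def mv_def
  by (rule ext) (simp add: sum_distrib_left sum_distrib_right mult.assoc, subst sum.swap, rule refl)

lemma mv_cong: "(\<And>l. l < m \<Longrightarrow> u l = w l) \<Longrightarrow> mv m A u = mv m A w"
  unfolding mv_def by (rule ext) (rule sum.cong, auto)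

lemma mv_qid: "i < m \<Longrightarrow> mv m (qid m) u i = u i"
  unfolding mv_def by (simp add: qid_sum_left)

lemma ip_mv: "ip m (mv m A u) w = ip m u (mv m (qadj A) w)"
  unfolding ip_def mv_def qadj_def
  by (simp add: qcnj_sum qcnj_mult sum_distrib_left sum_distrib_right mult.assoc, subst sum.swap, rule refl)

lemma ip_self: "ip m u u = qr (vn2 m u)"
  unfolding ip_def vn2_def by (simp add: qcnj_mult_self qr_sum)

lemma ip_swap: "ip m u w = qcnj (ip m w u)"
  unfolding ip_def by (simp add: qcnj_sum qcnj_mult)

lemma ip_cong: "(\<And>l. l < m \<Longrightarrow> w l = w' l) \<Longrightarrow> ip m u w = ip m u w'"
  unfolding ip_def by (rule sum.cong, auto)

lemma vn2_nonneg: "vn2 m u \<ge> 0" unfolding vn2_def by (simp add: sum_nonneg qnorm2_nonneg)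

lemma vn2_eq0: "vn2 m u = 0 \<Longrightarrow> l < m \<Longrightarrow> u l = 0"
  unfolding vn2_def using sum_nonneg_eq_0_iff[of "{..<m}" "\<lambda>l. qnorm2 (u l)"]
  by (simp add: qnorm2_nonneg qnorm2_eq0)

lemma vn2_Sp: assumes "A \<in> Sp m" shows "vn2 m (mv m A u) = vn2 m u"
proof -
  have "qr (vn2 m (mv m A u)) = ip m (mv m A u) (mv m A u)" by (simp add: ip_self)
  also have "\<dots> = ip m u (mv m (mm m (qadj A) A) u)" by (simp add: ip_mv mv_mm)
  also have "\<dots> = ip m u u" using assms by (intro ip_cong) (simp add: Sp_def mv_qid)
  finally show ?thesis by (simp add: ip_self qr_inj)
qed

definition hh :: "nat \<Rightarrow> (nat \<Rightarrow> quat) \<Rightarrow> qmat" where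
  "hh m v = (\<lambda>i j. if i < m \<and> j < m then qid m i j - qr (2 / vn2 m v) * v i * qcnj (v j) else 0)"

lemma hh_term: "(d1 - qr c * a * qcnj b) * (d2 - qr c * b * e) =
   d1*d2 - d1*(qr c * b * e) - qr c * a * qcnj b * d2 + qr (c*c) * a * (qcnj b * b) * e"
proof -
  have "qr c * a * qcnj b * (qr c * b * e) = qr c * (a * qcnj b * qr c) * (b * e)"
    by (simp add: mult.assoc)
  also have "\<dots> = qr c * (qr c * (a * qcnj b)) * (b * e)" by (simp add: qr_norm)
  also have "\<dots> = qr (c*c) * a * (qcnj b * b) * e" by (simp add: qr_mult mult.assoc)
  finally have *: "qr c * a * qcnj b * (qr c * b * e) = qr (c*c) * a * (qcnj b * b) * e" .
  have g: "\<And>X Y d1 d2::quat. (d1 - X) * (d2 - Y) = d1*d2 - d1*Y - X*d2 + X*Y"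
    by (simp add: algebra_simps)
  show ?thesis by (subst g) (simp only: *)
qed

lemma qadj_hh: "qadj (hh m v) = hh m v"
  unfolding qadj_def hh_def
  by (rule ext)+ (auto simp: qcnj_diff qcnj_mult qid_def qr_norm)

lemma hh_sq: "mm m (hh m p) (hh m p) = qid m"
proof (rule ext)+
  fix i j
  define c where "c = 2 / vn2 m p"
  show "mm m (hh m p) (hh m p) i j = qid m i j"
  proof (cases "i < m \<and> j < m")
    case False
    then show ?thesis by (auto simp: qmat_mult_def hh_def qid_def)
  next
    case True
    have "mm m (hh m p) (hh m p) i j = (\<Sum>l<m. qid m i l * qid m l j - qid m i l * (qr c * p l * qcnj (p j))
        - qr c * p i * qcnj (p l) * qid m l j + qr (c*c) * p i * (qcnj (p l) * p l) * qcnj (p j))"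
      unfolding qmat_mult_def using True
      by (intro sum.cong) (simp_all add: hh_def hh_term c_def)
    also have "\<dots> = qid m i j - qr c * p i * qcnj (p j) - qr c * p i * qcnj (p j)
        + (\<Sum>l<m. qr (c*c) * p i * (qcnj (p l) * p l) * qcnj (p j))"
      using True by (simp add: sum.distrib sum_subtractf qid_sum_left qid_sum_right)
    also have "(\<Sum>l<m. qr (c*c) * p i * (qcnj (p l) * p l) * qcnj (p j))
        = qr (c*c) * p i * ip m p p * qcnj (p j)"
      by (simp add: ip_def sum_distrib_left sum_distrib_right)
    also have "\<dots> = qr (c * c * vn2 m p) * p i * qcnj (p j)"
      by (simp add: ip_self qr_norm)
    also have "c * c * vn2 m p = c + c" by (simp add: c_def)
    also have "qid m i j - qr c * p i * qcnj (p j) - qr c * p i * qcnj (p j) +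
        qr (c + c) * p i * qcnj (p j) = qid m i j"
      by (simp only: qr_add distrib_right) (simp add: algebra_simps)
    finally show ?thesis .
  qed
qed

lemma hh_Sp: "hh m p \<in> Sp m"
  unfolding Sp_def by (simp add: qadj_hh hh_sq) (simp add: is_qmat_def hh_def)

lemma hh_map:
  assumes e: "vn2 m u = vn2 m t" and r: "ip m t u = qr r0" and i: "i < m"
  shows "mv m (hh m (\<lambda>l. u l - t l)) u i = t i"
proof -
  define p where "p = (\<lambda>l. u l - t l)"
  define S where "S = vn2 m u"
  define c where "c = 2 / vn2 m p"
  have "ip m p u = ip m u u - ip m t u"
    by (simp add: p_def ip_def qcnj_diff ring_distribs sum_subtractf)
  then have ipvu: "ip m p u = qr (S - r0)"
    by (simp add: ip_self r S_def qr_diff)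
  have ipvv: "ip m p p = qr (2*S - 2*r0)"
  proof -
    have "ip m p p = ip m u u - ip m u t - ip m t u + ip m t t"
      by (simp add: p_def ip_def qcnj_diff ring_distribs sum_subtractf sum.distrib algebra_simps)
    also have "\<dots> = qr S - qr r0 - qr r0 + qr S"
      by (simp add: ip_self S_def e ip_swap[of m u t] r)
    also have "\<dots> = qr (2*S - 2*r0)" by (simp add: qdefs algebra_simps)
    finally show ?thesis .
  qed
  have s: "vn2 m p = 2*S - 2*r0" using ipvv by (simp add: ip_self qr_inj)
  have "mv m (hh m p) u i = (\<Sum>l<m. qid m i l * u l - qr c * p i * (qcnj (p l) * u l))"
    unfolding mv_def using i by (intro sum.cong) (simp_all add: hh_def c_def ring_distribs mult.assoc)
  also have "\<dots> = u i - qr c * p i * ip m p u"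
    using i by (simp add: sum_subtractf qid_sum_left ip_def sum_distrib_left)
  also have "\<dots> = u i - qr (c * (S - r0)) * p i"
    by (simp add: ipvu qr_norm)
  also have "\<dots> = t i"
  proof (cases "vn2 m p = 0")
    case True
    then have "p i = 0" using vn2_eq0 i by blast
    then show ?thesis by (simp add: p_def)
  next
    case False
    then have "c * (S - r0) = 1" using s by (simp add: c_def)
    then show ?thesis by (simp add: p_def)
  qed
  finally show ?thesis by (simp add: p_def)
qed

definition dg :: "nat \<Rightarrow> (nat \<Rightarrow> quat) \<Rightarrow> qmat" where
  "dg m d = (\<lambda>i j. if i = j \<and> i < m then d i else 0)"

lemma dg_Sp: assumes "\<And>i. i < m \<Longrightarrow> qnorm2 (d i) = 1" shows "dg m d \<in> Sp m"
proof -
  have 1: "mm m (qadj (dg m d)) (dg m d) = qid m"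
  proof (rule ext)+
    fix i j
    have "mm m (qadj (dg m d)) (dg m d) i j = (\<Sum>l<m. if l = i then (if i = j \<and> i < m then qcnj (d i) * d i else 0) else 0)"
      unfolding qmat_mult_def qadj_def dg_def by (rule sum.cong) auto
    then show "mm m (qadj (dg m d)) (dg m d) i j = qid m i j"
      using assms by (simp add: qcnj_mult_self qid_def)
  qed
  have 2: "mm m (dg m d) (qadj (dg m d)) = qid m"
  proof (rule ext)+
    fix i j
    have "mm m (dg m d) (qadj (dg m d)) i j = (\<Sum>l<m. if l = i then (if i = j \<and> i < m then d i * qcnj (d i) else 0) else 0)"
      unfolding qmat_mult_def qadj_def dg_def by (rule sum.cong) auto
    then show "mm m (dg m d) (qadj (dg m d)) i j = qid m i j"
      using assms by (simp add: mult_qcnj_self qid_def)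
  qed
  show ?thesis using 1 2 by (simp add: Sp_def is_qmat_def dg_def)
qed

lemma mv_dg: "i < m \<Longrightarrow> mv m (dg m d) u i = d i * u i"
proof -
  assume i: "i < m"
  have "mv m (dg m d) u i = (\<Sum>l<m. if l = i then d i * u i else 0)"
    unfolding mv_def dg_def by (rule sum.cong) auto
  then show ?thesis using i by simp
qed



lemma qid_Sp: "qid m \<in> Sp m"
proof -
  have i: "is_qmat m (qid m)" by (simp add: is_qmat_def qid_def)
  have a: "qadj (qid m) = qid m" by (rule ext)+ (simp add: qadj_def qid_def)
  show ?thesis unfolding Sp_def using i by (simp add: a mm_qid_left)
qed

lemma to_e0:
  assumes m: "0 < m"
  shows "\<exists>M\<in>Sp m. \<forall>i<m. mv m M u i = (if i = 0 then qr (sqrt (vn2 m u)) else 0)"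
proof -
  define a where "a = u 0"
  define N where "N = qnorm2 a"
  define c where "c = (if a = 0 then 1 else qr (1 / sqrt N) * qcnj a)"
  have N0: "N \<ge> 0" by (simp add: N_def qnorm2_nonneg)
  have c1: "qnorm2 c = 1"
  proof (cases "a = 0")
    case False
    then have "N > 0" using N0 qnorm2_eq0 N_def by (metis less_eq_real_def)
    then show ?thesis using False
      by (simp add: c_def qnorm2_mult qnorm2_qr N_def[symmetric] power_divide)
  qed (simp add: c_def)
  have ca: "c * a = qr (sqrt N)"
  proof (cases "a = 0")
    case False
    then have Np: "N > 0" using N0 qnorm2_eq0 N_def by (metis less_eq_real_def)
    have "c * a = qr (1 / sqrt N) * (qcnj a * a)" using False by (simp add: c_def mult.assoc)
    also have "\<dots> = qr (N / sqrt N)" by (simp add: qcnj_mult_self N_def qr_qr)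
    also have "N / sqrt N = sqrt N" using Np by (metis real_div_sqrt less_imp_le)
    finally show ?thesis .
  qed (simp add: c_def N_def qnorm2_def zero_quat_def qr_def)
  define d where "d = (\<lambda>i::nat. if i = 0 then c else 1)"
  define D where "D = dg m d"
  have DSp: "D \<in> Sp m" unfolding D_def by (rule dg_Sp) (simp add: d_def c1)
  define u' where "u' = mv m D u"
  have u'0: "u' 0 = qr (sqrt N)" using m ca by (simp add: u'_def D_def mv_dg d_def a_def)
  define R where "R = sqrt (vn2 m u)"
  have vu': "vn2 m u' = vn2 m u" unfolding u'_def using DSp by (rule vn2_Sp)
  define t where "t = (\<lambda>i::nat. if i = 0 then qr R else 0)"
  have vt: "vn2 m t = vn2 m u"
  proof -
    have "vn2 m t = (\<Sum>l<m. if l = 0 then R^2 else 0)"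
      unfolding vn2_def t_def by (rule sum.cong) (auto simp: qnorm2_qr qnorm2_eq0)
    also have "\<dots> = R^2" using m by simp
    also have "\<dots> = vn2 m u" by (simp add: R_def vn2_nonneg)
    finally show ?thesis .
  qed
  have ipt: "ip m t u' = qr (R * sqrt N)"
  proof -
    have "ip m t u' = (\<Sum>l<m. if l = 0 then qr R * u' 0 else 0)"
      unfolding ip_def t_def by (rule sum.cong) auto
    also have "\<dots> = qr (R * sqrt N)" using m by (simp add: u'0 qr_qr)
    finally show ?thesis .
  qed
  define H where "H = hh m (\<lambda>l. u' l - t l)"
  have M0: "\<forall>i<m. mv m (mm m H D) u i = t i"
    using hh_map[of m u' t, OF _ ipt] vu' vt by (simp add: mv_mm H_def u'_def)
  have M1: "\<forall>i<m. mv m (mm m H D) u i = (if i = 0 then qr (sqrt (vn2 m u)) else 0)"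
    using M0 unfolding t_def R_def .
  have MSp: "mm m H D \<in> Sp m" by (simp add: H_def Sp_mm hh_Sp DSp)
  show ?thesis using M1 MSp by (rule bexI)
qed

lemma sp_trans:
  assumes e: "vn2 m u = vn2 m w"
  shows "\<exists>A\<in>Sp m. \<forall>i<m. mv m A u i = w i"
proof (cases "m = 0")
  case True then show ?thesis using qid_Sp by auto
next
  case False
  then obtain Mu where Mu: "Mu \<in> Sp m" "\<forall>i<m. mv m Mu u i = (if i = 0 then qr (sqrt (vn2 m u)) else 0)"
    using to_e0 by blast
  obtain Mw where Mw: "Mw \<in> Sp m" "\<forall>i<m. mv m Mw w i = (if i = 0 then qr (sqrt (vn2 m w)) else 0)"
    using to_e0 False by blast
  have "\<forall>i<m. mv m (mm m (qadj Mw) Mu) u i = w i"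
  proof (intro allI impI)
    fix i assume i: "i < m"
    have "mv m (mm m (qadj Mw) Mu) u i = mv m (qadj Mw) (mv m Mu u) i" by (simp add: mv_mm)
    also have "mv m (qadj Mw) (mv m Mu u) = mv m (qadj Mw) (mv m Mw w)"
      by (rule mv_cong) (simp add: Mu Mw e)
    also have "\<dots> i = mv m (qid m) w i" using Mw(1) by (simp add: mv_mm[symmetric] Sp_def)
    also have "\<dots> = w i" using i by (simp add: mv_qid)
    finally show "mv m (mm m (qadj Mw) Mu) u i = w i" .
  qed
  then show ?thesis using Mu Mw by (meson Sp_mm Sp_qadj)
qed

definition de :: "nat \<Rightarrow> qmat \<Rightarrow> quat \<Rightarrow> qmat" where
  "de m B q = (\<lambda>i j. if i < m \<and> j < m then B i j else if i = m \<and> j = m then q else 0)"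

lemma qadj_de: "qadj (de m B q) = de m (qadj B) (qcnj q)"
  by (rule ext)+ (auto simp: qadj_def de_def)

lemma sum_de_left: "(\<Sum>l<Suc m. de m C q i l * x l) = (if i < m then (\<Sum>l<m. C i l * x l) else if i = m then q * x m else 0)"
proof -
  have "(\<Sum>l<m. de m C q i l * x l) = (if i < m then (\<Sum>l<m. C i l * x l) else 0)"
    by (auto simp: de_def intro: sum.cong)
  then show ?thesis by (simp add: de_def)
qed

lemma mm_de: "mm (Suc m) (de m B1 q1) (de m B2 q2) = de m (mm m B1 B2) (q1 * q2)"
proof (rule ext)+
  fix i j
  have "mm (Suc m) (de m B1 q1) (de m B2 q2) i j = (if i < m then (\<Sum>l<m. B1 i l * de m B2 q2 l j) else if i = m then q1 * de m B2 q2 m j else 0)"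
    unfolding qmat_mult_def by (rule sum_de_left)
  also have "\<dots> = de m (mm m B1 B2) (q1 * q2) i j"
  proof -
    have "(\<Sum>l<m. B1 i l * de m B2 q2 l j) = (if j < m then (\<Sum>l<m. B1 i l * B2 l j) else 0)"
      by (auto simp: de_def intro: sum.cong)
    then show ?thesis by (auto simp: de_def qmat_mult_def)
  qed
  finally show "mm (Suc m) (de m B1 q1) (de m B2 q2) i j = de m (mm m B1 B2) (q1 * q2) i j" .
qed

lemma de_qid: "de m (qid m) 1 = qid (Suc m)"
  by (rule ext)+ (auto simp: de_def qid_def)

lemma is_qmat_de: "is_qmat (Suc m) (de m B q)" by (auto simp: is_qmat_def de_def)

lemma de_Sp: assumes "B \<in> Sp m" "qnorm2 q = 1" shows "de m B q \<in> Sp (Suc m)"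
proof -
  have "qcnj q * q = 1" "q * qcnj q = 1" using assms(2) by (simp_all add: qcnj_mult_self mult_qcnj_self)
  then show ?thesis using assms(1) unfolding Sp_def
    by (simp add: is_qmat_de qadj_de mm_de de_qid)
qed

lemma de_Sp_inv: assumes "de m B q \<in> Sp (Suc m)" "is_qmat m B" shows "B \<in> Sp m"
proof -
  have 1: "de m (mm m (qadj B) B) (qcnj q * q) = qid (Suc m)"
    using assms(1) by (simp add: Sp_def qadj_de mm_de)
  have 2: "de m (mm m B (qadj B)) (q * qcnj q) = qid (Suc m)"
    using assms(1) by (simp add: Sp_def qadj_de mm_de)
  have q1: "mm m (qadj B) B = qid m"
  proof (rule ext)+
    fix i j
    show "mm m (qadj B) B i j = qid m i j"
    proof (cases "i < m \<and> j < m")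
      case True then show ?thesis using fun_cong[OF fun_cong[OF 1, of i], of j] by (simp add: de_def qid_def)
    next
      case False
      have "is_qmat m (mm m (qadj B) B)" by (simp add: assms(2) is_qmat_mm is_qmat_qadj)
      then show ?thesis using False by (auto simp: is_qmat_def qid_def)
    qed
  qed
  have q2: "mm m B (qadj B) = qid m"
  proof (rule ext)+
    fix i j
    show "mm m B (qadj B) i j = qid m i j"
    proof (cases "i < m \<and> j < m")
      case True then show ?thesis using fun_cong[OF fun_cong[OF 2, of i], of j] by (simp add: de_def qid_def)
    next
      case False
      have "is_qmat m (mm m B (qadj B))" by (simp add: assms(2) is_qmat_mm is_qmat_qadj)
      then show ?thesis using False by (auto simp: is_qmat_def qid_def)
    qed
  qed
  show ?thesis using q1 q2 assms(2) by (simp add: Sp_def)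
qed



lemma sum_qadj_de_right: "(\<Sum>l<Suc m. x l * qadj (de m B q) l m) = x m * qcnj q"
proof -
  have "(\<Sum>l<m. x l * qadj (de m B q) l m) = 0"
    by (rule sum.neutral) (auto simp: qadj_def de_def)
  then show ?thesis by (simp add: qadj_def de_def)
qed

lemma col_h:
  assumes n: "n \<ge> 1"
  shows "mm (Suc n) (de n (de (n-1) A q1) q2) x i j =
    (if i < n-1 then (\<Sum>l<n-1. A i l * x l j) else if i = n-1 then q1 * x (n-1) j
     else if i = n then q2 * x n j else 0)"
proof -
  obtain k where k: "n = Suc k" using n by (cases n) auto
  have "mm (Suc n) (de n (de (n-1) A q1) q2) x i j =
     (if i < n then (\<Sum>l<n. de (n-1) A q1 i l * x l j) else if i = n then q2 * x n j else 0)"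
    unfolding qmat_mult_def by (rule sum_de_left)
  also have "(\<Sum>l<n. de (n-1) A q1 i l * x l j) =
     (if i < n-1 then (\<Sum>l<n-1. A i l * x l j) else if i = n-1 then q1 * x (n-1) j else 0)"
    using sum_de_left[of k A q1 i "\<lambda>l. x l j"] by (simp add: k)
  finally show ?thesis using k by auto
qed

lemma fwd:
  assumes n: "n \<ge> 2" and A: "A \<in> Sp (n-1)"
    and q: "qnorm2 q = 1" "qnorm2 q1 = 1" "qnorm2 q2 = 1"
    and y: "y = mm (Suc n) (mm (Suc n) (de n (de (n-1) A q1) q2) x) (qadj (de n B q))"
  shows "v0_norm n y = v0_norm n x \<and> vn_norm n y = vn_norm n x \<and> vlast_norm n y = vlast_norm n x"
proof -
  define h where "h = de n (de (n-1) A q1) q2"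
  have yc: "y i n = mm (Suc n) h x i n * qcnj q" for i
  proof -
    have 1: "y i n = (\<Sum>l<Suc n. mm (Suc n) h x i l * qadj (de n B q) l n)"
      unfolding y h_def by (simp only: qmat_mult_def[of "Suc n" "mm (Suc n) _ x"])
    have 2: "(\<Sum>l<Suc n. mm (Suc n) h x i l * qadj (de n B q) l n) = mm (Suc n) h x i n * qcnj q"
      by (rule sum_qadj_de_right)
    show ?thesis using trans[OF 1 2] .
  qed
  define u where "u = (\<lambda>l. x l n)"
  have nn: "n \<noteq> n - Suc 0" "\<not> n < n - Suc 0" using n by auto
  have c0: "i < n-1 \<Longrightarrow> y i n = mv (n-1) A u i * qcnj q" for i
    using n col_h[of n A q1 q2 x i n] by (simp add: yc h_def mv_def u_def)
  have c1: "y (n-1) n = q1 * x (n-1) n * qcnj q" using n col_h[of n A q1 q2 x "n-1" n] by (simp add: yc h_def mult.assoc)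
  have c2: "y n n = q2 * x n n * qcnj q" using n col_h[of n A q1 q2 x n n] by (simp add: yc h_def mult.assoc nn)
  have "(\<Sum>i<n-1. qnorm2 (y i n)) = (\<Sum>i<n-1. qnorm2 (mv (n-1) A u i))"
    by (rule sum.cong) (simp_all add: c0 qnorm2_mult q)
  also have "\<dots> = vn2 (n-1) u" using vn2_Sp[OF A] by (simp add: vn2_def)
  finally have "v0_norm n y = v0_norm n x" by (simp add: v0_norm_def vn2_def u_def)
  moreover have "vn_norm n y = vn_norm n x" by (simp add: vn_norm_def qnorm_def c1[simplified] qnorm2_mult q)
  moreover have "vlast_norm n y = vlast_norm n x" by (simp add: vlast_norm_def qnorm_def c2 qnorm2_mult q)
  ultimately show ?thesis by simp
qed

lemma N_form: assumes "n \<ge> 2" "h \<in> N_grp n"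
  shows "\<exists>A q1 q2. A \<in> Sp (n-1) \<and> qnorm2 q1 = 1 \<and> qnorm2 q2 = 1 \<and> h = de n (de (n-1) A q1) q2"
proof -
  obtain A q1 q2 where *: "A \<in> Sp (n-1)" "qnorm q1 = 1" "qnorm q2 = 1"
    "h = (\<lambda>i j. if i < n - 1 \<and> j < n - 1 then A i j
                 else if i = n - 1 \<and> j = n - 1 then q1
                 else if i = n \<and> j = n then q2 else 0)"
    using assms(2) unfolding N_grp_def by blast
  have "h = de n (de (n-1) A q1) q2" using assms(1) unfolding *(4) de_def by (intro ext) auto
  then show ?thesis using * by (auto simp: qnorm_1_iff)
qed

lemma N_intro: assumes "n \<ge> 2" "A \<in> Sp (n-1)" "qnorm2 q1 = 1" "qnorm2 q2 = 1"
  shows "de n (de (n-1) A q1) q2 \<in> N_grp n"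
proof -
  have "de n (de (n-1) A q1) q2 = (\<lambda>i j. if i < n - 1 \<and> j < n - 1 then A i j
                 else if i = n - 1 \<and> j = n - 1 then q1
                 else if i = n \<and> j = n then q2 else 0)"
    using assms(1) unfolding de_def by (intro ext) auto
  then show ?thesis using assms unfolding N_grp_def by (auto simp: qnorm_1_iff)
qed

lemma K_form: "k \<in> K_grp n \<Longrightarrow> \<exists>B q. B \<in> Sp n \<and> qnorm2 q = 1 \<and> k = de n B q"
  unfolding K_grp_def de_def by (auto simp: qnorm_1_iff)

lemma K_intro: "B \<in> Sp n \<Longrightarrow> qnorm2 q = 1 \<Longrightarrow> de n B q \<in> K_grp n"
  unfolding K_grp_def de_def by (auto simp: qnorm_1_iff)



lemma bwd:
  assumes n: "n \<ge> 2" and x: "x \<in> Sp (Suc n)" and y: "y \<in> Sp (Suc n)"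
    and e0: "v0_norm n x = v0_norm n y" and e1: "vn_norm n x = vn_norm n y"
    and e2: "vlast_norm n x = vlast_norm n y"
  shows "\<exists>h\<in>N_grp n. h \<in> Sp (Suc n) \<and> (\<exists>k\<in>K_grp n. mm (Suc n) (mm (Suc n) h x) (qadj k) = y)"
proof -
  define u where "u = (\<lambda>l. x l n)"
  define w where "w = (\<lambda>l. y l n)"
  have "vn2 (n-1) u = vn2 (n-1) w" using e0 by (simp add: v0_norm_def vn2_def u_def w_def)
  then obtain A where A: "A \<in> Sp (n-1)" "\<forall>i<n-1. mv (n-1) A u i = w i" using sp_trans by blast
  obtain q1 where q1: "qnorm q1 = 1" "q1 * x (n-1) n = y (n-1) n"
    using unit_left e1 unfolding vn_norm_def by blast
  obtain q2 where q2: "qnorm q2 = 1" "q2 * x n n = y n n"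
    using unit_left e2 unfolding vlast_norm_def by blast
  define h where "h = de n (de (n-1) A q1) q2"
  have hN: "h \<in> N_grp n" unfolding h_def
    by (rule N_intro) (use n A q1 q2 in \<open>auto simp: qnorm_1_iff\<close>)
  have "de (n-1) A q1 \<in> Sp (Suc (n-1))" by (rule de_Sp) (use A q1 in \<open>auto simp: qnorm_1_iff\<close>)
  then have "de (n-1) A q1 \<in> Sp n" using n by simp
  then have hSp: "h \<in> Sp (Suc n)" unfolding h_def
    by (rule de_Sp) (use q2 in \<open>auto simp: qnorm_1_iff\<close>)
  define z where "z = mm (Suc n) h x"
  have nn: "n \<noteq> n - Suc 0" "\<not> n < n - Suc 0" using n by auto
  have zc: "z i n = y i n" if i: "i < Suc n" for i
  proof -
    have c: "z i n = (if i < n-1 then (\<Sum>l<n-1. A i l * x l n) else if i = n-1 then q1 * x (n-1) n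
     else if i = n then q2 * x n n else 0)" unfolding z_def h_def by (rule col_h) (use n in auto)
    consider "i < n - 1" | "i = n - 1" | "i = n" using i by linarith
    then show ?thesis
    proof cases
      case 1 then show ?thesis using c A(2) by (simp add: mv_def u_def w_def)
    next
      case 2 then show ?thesis using c q1(2) by simp
    next
      case 3 then show ?thesis using c q2(2) nn by simp
    qed
  qed
  define k where "k = mm (Suc n) (qadj y) z"
  have kSp: "k \<in> Sp (Suc n)" by (simp add: k_def z_def Sp_mm Sp_qadj hSp x y)
  have kcol: "k i n = qid (Suc n) i n" for i
  proof -
    have "k i n = (\<Sum>l<Suc n. qcnj (y l i) * y l n)"
      unfolding k_def qmat_mult_def qadj_def by (rule sum.cong) (simp_all add: zc)
    also have "\<dots> = mm (Suc n) (qadj y) y i n" by (simp add: qmat_mult_def qadj_def)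
    also have "\<dots> = qid (Suc n) i n" using y by (simp add: Sp_def)
    finally show ?thesis .
  qed
  have krow: "k n j = qid (Suc n) n j" for j
  proof -
    have "qcnj (k n j) = (\<Sum>l<Suc n. qcnj (k l j) * qid (Suc n) l n)" by (simp add: qid_sum_right)
    also have "\<dots> = mm (Suc n) (qadj k) k j n"
      unfolding qmat_mult_def qadj_def by (rule sum.cong) (simp_all add: kcol)
    also have "\<dots> = qid (Suc n) j n" using kSp by (simp add: Sp_def)
    finally have "qcnj (k n j) = qid (Suc n) j n" .
    then have "k n j = qcnj (qid (Suc n) j n)" by (metis qcnj_qcnj)
    then show ?thesis by (simp add: qid_def)
  qed
  define B where "B = (\<lambda>i j. if i < n \<and> j < n then k i j else 0)"
  have kq: "is_qmat (Suc n) k" using kSp by (rule Sp_is_qmat)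
  have kde: "k = de n B 1"
  proof (rule ext)+
    fix i j
    show "k i j = de n B 1 i j"
    proof (cases "i < n \<and> j < n")
      case True then show ?thesis by (simp add: de_def B_def)
    next
      case False
      show ?thesis
      proof (cases "i = n")
        case True then show ?thesis using False by (simp add: krow qid_def de_def)
      next
        case iF: False
        show ?thesis
        proof (cases "j = n")
          case True then show ?thesis using iF by (simp add: kcol qid_def de_def)
        next
          case jF: False
          then have "Suc n \<le> i \<or> Suc n \<le> j" using False iF by auto
          then show ?thesis using kq iF jF False by (auto simp: is_qmat_def de_def)
        qed
      qed
    qed
  qed
  have BSp: "B \<in> Sp n" using kSp unfolding kde
    by (rule de_Sp_inv) (simp add: is_qmat_def B_def)
  have kK: "k \<in> K_grp n" unfolding kde by (rule K_intro[OF BSp]) simp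
  have hq: "is_qmat (Suc n) h" using hSp by (rule Sp_is_qmat)
  have yq: "is_qmat (Suc n) y" using y by (rule Sp_is_qmat)
  have "mm (Suc n) z (qadj k) = y"
    unfolding k_def z_def
    by (simp add: qadj_mm mm_assoc Sp_cancel2 x hSp is_qmat_mm is_qmat_qadj hq yq)
  then show ?thesis using hN hSp kK unfolding z_def by blast
qed

theorem proposition2p5:
  fixes n :: nat and g1 g2 h1 h2 :: qmat
  assumes "n \<ge> 2"
    and "g1 \<in> Sp (n+1)" "g2 \<in> Sp (n+1)" "h1 \<in> Sp (n+1)" "h2 \<in> Sp (n+1)"
  shows "same_orbit n (g1, g2) (h1, h2) \<longleftrightarrow>
    (let x = qmat_mult (n+1) (qadj g2) g1; y = qmat_mult (n+1) (qadj h2) h1 in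
      v0_norm n x = v0_norm n y \<and> vn_norm n x = vn_norm n y \<and> vlast_norm n x = vlast_norm n y)"
proof -
  have N: "n + 1 = Suc n" by simp
  note n = assms(1)
  have g1: "g1 \<in> Sp (Suc n)" and g2: "g2 \<in> Sp (Suc n)" and h1: "h1 \<in> Sp (Suc n)"
    and h2: "h2 \<in> Sp (Suc n)" using assms by simp_all
  have g1q: "is_qmat (Suc n) g1" and g2q: "is_qmat (Suc n) g2" and h1q: "is_qmat (Suc n) h1"
    and h2q: "is_qmat (Suc n) h2" using g1 g2 h1 h2 by (simp_all add: Sp_is_qmat)
  define x where "x = mm (Suc n) (qadj g2) g1"
  define y where "y = mm (Suc n) (qadj h2) h1"
  have xSp: "x \<in> Sp (Suc n)" by (simp add: x_def Sp_mm Sp_qadj g1 g2)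
  have ySp: "y \<in> Sp (Suc n)" by (simp add: y_def Sp_mm Sp_qadj h1 h2)
  have "same_orbit n (g1, g2) (h1, h2) \<longleftrightarrow>
      (v0_norm n x = v0_norm n y \<and> vn_norm n x = vn_norm n y \<and> vlast_norm n x = vlast_norm n y)"
  proof
    assume "same_orbit n (g1, g2) (h1, h2)"
    then obtain g k h where g: "g \<in> Sp (Suc n)" and k: "k \<in> K_grp n" and h: "h \<in> N_grp n"
      and e1: "h1 = mm (Suc n) (mm (Suc n) g g1) (qadj k)"
      and e2: "h2 = mm (Suc n) (mm (Suc n) g g2) (qadj h)"
      unfolding same_orbit_def by auto
    obtain B q where B: "B \<in> Sp n" "qnorm2 q = 1" "k = de n B q" using K_form[OF k] by blast
    obtain A q1 q2 where A: "A \<in> Sp (n-1)" "qnorm2 q1 = 1" "qnorm2 q2 = 1"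
      "h = de n (de (n-1) A q1) q2" using N_form[OF n h] by blast
    have kq: "is_qmat (Suc n) k" using B(3) by (simp add: is_qmat_de)
    have yeq: "y = mm (Suc n) (mm (Suc n) h x) (qadj k)"
      unfolding y_def x_def e1 e2
      by (simp add: qadj_mm mm_assoc Sp_cancel1 g is_qmat_mm is_qmat_qadj g1q kq)
    have "v0_norm n y = v0_norm n x \<and> vn_norm n y = vn_norm n x \<and> vlast_norm n y = vlast_norm n x"
      by (rule fwd[OF n A(1) B(2) A(2) A(3)]) (simp add: yeq A(4) B(3))
    then show "v0_norm n x = v0_norm n y \<and> vn_norm n x = vn_norm n y \<and> vlast_norm n x = vlast_norm n y"
      by simp
  next
    assume eqs: "v0_norm n x = v0_norm n y \<and> vn_norm n x = vn_norm n y \<and> vlast_norm n x = vlast_norm n y"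
    obtain h where hN: "h \<in> N_grp n" and hSp: "h \<in> Sp (Suc n)"
      and kex: "\<exists>k\<in>K_grp n. mm (Suc n) (mm (Suc n) h x) (qadj k) = y"
      using bwd[OF n xSp ySp] eqs by blast
    obtain k where kK: "k \<in> K_grp n" and hk: "mm (Suc n) (mm (Suc n) h x) (qadj k) = y"
      using kex by blast
    define g where "g = mm (Suc n) (mm (Suc n) h2 h) (qadj g2)"
    have gSp: "g \<in> Sp (Suc n)" by (simp add: g_def Sp_mm Sp_qadj h2 hSp g2)
    have hq: "is_qmat (Suc n) h" using hSp by (rule Sp_is_qmat)
    have eq1: "h1 = mm (Suc n) (mm (Suc n) g g1) (qadj k)"
    proof -
      have "mm (Suc n) (mm (Suc n) g g1) (qadj k) = mm (Suc n) h2 (mm (Suc n) (mm (Suc n) h x) (qadj k))"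
        by (simp add: g_def x_def mm_assoc)
      also have "\<dots> = mm (Suc n) h2 y" by (simp add: hk)
      also have "\<dots> = h1" unfolding y_def by (rule Sp_cancel2[OF h2 h1q])
      finally show ?thesis by simp
    qed
    have eq2: "h2 = mm (Suc n) (mm (Suc n) g g2) (qadj h)"
    proof -
      have "mm (Suc n) (mm (Suc n) g g2) (qadj h) = mm (Suc n) h2 (mm (Suc n) h (mm (Suc n) (qadj g2) (mm (Suc n) g2 (qadj h))))"
        by (simp add: g_def mm_assoc)
      also have "\<dots> = mm (Suc n) h2 (mm (Suc n) h (qadj h))"
        by (simp add: Sp_cancel1[OF g2] is_qmat_qadj hq)
      also have "\<dots> = h2" using hSp by (simp add: Sp_def mm_qid_right h2q)
      finally show ?thesis by simp
    qed
    show "same_orbit n (g1, g2) (h1, h2)"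
      unfolding same_orbit_def N using gSp kK hN eq1 eq2 by auto
  qed
  then show ?thesis unfolding Let_def N x_def y_def .
qed

end
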